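(* Let $K$ be a field, $A$ a cocommutative Hopf algebra over $K$ with antipode $S$, and $X,Y$ normal Hopf subalgebras of $A$. Let $[X,Y]$ be the subalgebra of $A$ generated by all elements $\{a,b\}=a_1b_1S(a_2)S(b_2)$ with $a\in X$, $b\in Y$. Then $[X,Y]$ is a normal Hopf subalgebra of $A$.
   Context: Sweedler notation $\Delta(a)=a_1\otimes a_2$. A Hopf subalgebra $D$ of $A$ is normal if $a_1dS(a_2)\in D$ for all $a\in A$, $d\in D$. *)

theory Defs
  imports Main "HOL.Vector_Spaces"
begin

text \<open>
  Hopf algebras over a field K, encoded without a tensor-product type.  An element of A (x) A is represented by a formal finite sum
  sum_i u_i (x) v_i, i.e. a list of pairs; two formal sums denote the same tensor iff
  every K-bilinear form A x A -> K takes the same value on them (over a field, A (x) A is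
  separated by (A (x) A)^* = Bil(A x A, K)).  Similarly for A (x) A (x) A with trilinear
  forms.  The comultiplication is given as a function returning a formal sum
  Delta(a) = sum a_1 (x) a_2 (Sweedler notation).
\<close>

definition tsum :: "('a \<Rightarrow> 'b \<Rightarrow> 'c::ab_group_add) \<Rightarrow> ('a \<times> 'b) list \<Rightarrow> 'c" where
  "tsum f t = (\<Sum>(x, y)\<leftarrow>t. f x y)"

definition k_bilinear :: "('k::field \<Rightarrow> 'a::ab_group_add \<Rightarrow> 'a) \<Rightarrow> ('a \<Rightarrow> 'a \<Rightarrow> 'k) \<Rightarrow> bool" where
  "k_bilinear scale f \<longleftrightarrow>
     (\<forall>x. Vector_Spaces.linear scale (*) (f x)) \<and>
     (\<forall>y. Vector_Spaces.linear scale (*) (\<lambda>x. f x y))"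

definition k_trilinear :: "('k::field \<Rightarrow> 'a::ab_group_add \<Rightarrow> 'a) \<Rightarrow> ('a \<Rightarrow> 'a \<Rightarrow> 'a \<Rightarrow> 'k) \<Rightarrow> bool" where
  "k_trilinear scale g \<longleftrightarrow>
     (\<forall>x y. Vector_Spaces.linear scale (*) (g x y)) \<and>
     (\<forall>x z. Vector_Spaces.linear scale (*) (\<lambda>y. g x y z)) \<and>
     (\<forall>y z. Vector_Spaces.linear scale (*) (\<lambda>x. g x y z))"

definition teq :: "('k::field \<Rightarrow> 'a::ab_group_add \<Rightarrow> 'a) \<Rightarrow> ('a \<times> 'a) list \<Rightarrow> ('a \<times> 'a) list \<Rightarrow> bool" where
  "teq scale s t \<longleftrightarrow> (\<forall>f. k_bilinear scale f \<longrightarrow> tsum f s = tsum f t)"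

definition k_algebra :: "('k::field \<Rightarrow> 'a::ring_1 \<Rightarrow> 'a) \<Rightarrow> bool" where
  "k_algebra scale \<longleftrightarrow> vector_space scale \<and>
     (\<forall>c x y. scale c (x * y) = scale c x * y \<and> scale c (x * y) = x * scale c y)"

definition hopf_algebra ::
  "('k::field \<Rightarrow> 'a::ring_1 \<Rightarrow> 'a) \<Rightarrow> ('a \<Rightarrow> ('a \<times> 'a) list) \<Rightarrow> ('a \<Rightarrow> 'k) \<Rightarrow> ('a \<Rightarrow> 'a) \<Rightarrow> bool" where
  "hopf_algebra scale \<Delta> \<epsilon> S \<longleftrightarrow>
     k_algebra scale \<and>
     \<comment> \<open>Delta and epsilon are linear\<close>
     (\<forall>x y. teq scale (\<Delta> (x + y)) (\<Delta> x @ \<Delta> y)) \<and>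
     (\<forall>c x. teq scale (\<Delta> (scale c x)) (map (\<lambda>(u, v). (scale c u, v)) (\<Delta> x))) \<and>
     Vector_Spaces.linear scale (*) \<epsilon> \<and>
     \<comment> \<open>coassociativity\<close>
     (\<forall>x g. k_trilinear scale g \<longrightarrow>
        tsum (\<lambda>u v. tsum (\<lambda>p q. g p q v) (\<Delta> u)) (\<Delta> x) =
        tsum (\<lambda>u v. tsum (\<lambda>p q. g u p q) (\<Delta> v)) (\<Delta> x)) \<and>
     \<comment> \<open>counit\<close>
     (\<forall>x. tsum (\<lambda>u v. scale (\<epsilon> u) v) (\<Delta> x) = x \<and> tsum (\<lambda>u v. scale (\<epsilon> v) u) (\<Delta> x) = x) \<and>
     \<comment> \<open>Delta and epsilon are unital algebra maps\<close>
     (\<forall>x y. teq scale (\<Delta> (x * y))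
        (concat (map (\<lambda>(u, v). map (\<lambda>(p, q). (u * p, v * q)) (\<Delta> y)) (\<Delta> x)))) \<and>
     teq scale (\<Delta> 1) [(1, 1)] \<and>
     (\<forall>x y. \<epsilon> (x * y) = \<epsilon> x * \<epsilon> y) \<and> \<epsilon> 1 = 1 \<and>
     \<comment> \<open>antipode\<close>
     Vector_Spaces.linear scale scale S \<and>
     (\<forall>x. tsum (\<lambda>u v. u * S v) (\<Delta> x) = scale (\<epsilon> x) 1 \<and>
          tsum (\<lambda>u v. S u * v) (\<Delta> x) = scale (\<epsilon> x) 1)"

definition cocommutative :: "('k::field \<Rightarrow> 'a::ring_1 \<Rightarrow> 'a) \<Rightarrow> ('a \<Rightarrow> ('a \<times> 'a) list) \<Rightarrow> bool" where
  "cocommutative scale \<Delta> \<longleftrightarrow> (\<forall>x. teq scale (\<Delta> x) (map prod.swap (\<Delta> x)))"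

definition subalgebra :: "('k::field \<Rightarrow> 'a::ring_1 \<Rightarrow> 'a) \<Rightarrow> 'a set \<Rightarrow> bool" where
  "subalgebra scale B \<longleftrightarrow> 1 \<in> B \<and> (\<forall>x\<in>B. \<forall>y\<in>B. x + y \<in> B \<and> x * y \<in> B) \<and>
     (\<forall>c. \<forall>x\<in>B. scale c x \<in> B)"

definition hopf_subalgebra ::
  "('k::field \<Rightarrow> 'a::ring_1 \<Rightarrow> 'a) \<Rightarrow> ('a \<Rightarrow> ('a \<times> 'a) list) \<Rightarrow> ('a \<Rightarrow> 'a) \<Rightarrow> 'a set \<Rightarrow> bool" where
  "hopf_subalgebra scale \<Delta> S D \<longleftrightarrow> subalgebra scale D \<and>
     (\<forall>d\<in>D. \<exists>t. set t \<subseteq> D \<times> D \<and> teq scale (\<Delta> d) t) \<and> S ` D \<subseteq> D"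

definition normal_hopf_subalgebra ::
  "('k::field \<Rightarrow> 'a::ring_1 \<Rightarrow> 'a) \<Rightarrow> ('a \<Rightarrow> ('a \<times> 'a) list) \<Rightarrow> ('a \<Rightarrow> 'a) \<Rightarrow> 'a set \<Rightarrow> bool" where
  "normal_hopf_subalgebra scale \<Delta> S D \<longleftrightarrow> hopf_subalgebra scale \<Delta> S D \<and>
     (\<forall>a d. d \<in> D \<longrightarrow> tsum (\<lambda>u v. u * d * S v) (\<Delta> a) \<in> D)"

definition hopf_bracket :: "('a \<Rightarrow> ('a \<times> 'a) list) \<Rightarrow> ('a \<Rightarrow> 'a) \<Rightarrow> 'a \<Rightarrow> 'a \<Rightarrow> 'a::ring_1" where
  "hopf_bracket \<Delta> S a b = tsum (\<lambda>u v. tsum (\<lambda>p q. u * p * S v * S q) (\<Delta> b)) (\<Delta> a)"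

definition generated_subalgebra :: "('k::field \<Rightarrow> 'a::ring_1 \<Rightarrow> 'a) \<Rightarrow> 'a set \<Rightarrow> 'a set" where
  "generated_subalgebra scale G = \<Inter>{B. subalgebra scale B \<and> G \<subseteq> B}"

definition hopf_commutator ::
  "('k::field \<Rightarrow> 'a::ring_1 \<Rightarrow> 'a) \<Rightarrow> ('a \<Rightarrow> ('a \<times> 'a) list) \<Rightarrow> ('a \<Rightarrow> 'a) \<Rightarrow> 'a set \<Rightarrow> 'a set \<Rightarrow> 'a set" where
  "hopf_commutator scale \<Delta> S X Y =
     generated_subalgebra scale {hopf_bracket \<Delta> S a b | a b. a \<in> X \<and> b \<in> Y}"

end

theory Submission
  imports Defs
begin

lemma sep:
  fixes sv :: "'k::field \<Rightarrow> 'v::ab_group_add \<Rightarrow> 'v"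
  assumes vs: "vector_space sv" and h: "\<And>\<phi>. Vector_Spaces.linear sv (*) \<phi> \<Longrightarrow> \<phi> z = 0"
  shows "z = 0"
proof (rule ccontr)
  assume z: "z \<noteq> 0"
  have vk: "vector_space ((*) :: 'k \<Rightarrow> 'k \<Rightarrow> 'k)"
    by unfold_locales (auto simp: algebra_simps)
  interpret vp: vector_space_pair sv "(*) :: 'k \<Rightarrow> 'k \<Rightarrow> 'k"
    using vs vk by (simp add: vector_space_pair_def)
  have "vp.vs1.independent {z}" using z by simp
  from vp.linear_independent_extend[OF this, of "\<lambda>_. 1"]
  obtain g where "Vector_Spaces.linear sv (*) g" "g z = 1" by auto
  with h show False by force
qed

lemma vsK: "vector_space ((*) :: 'k::field \<Rightarrow> 'k \<Rightarrow> 'k)"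
  by unfold_locales (auto simp: algebra_simps)

lemma tsum_Nil[simp]: "tsum f [] = 0" by (simp add: tsum_def)
lemma tsum_Cons[simp]: "tsum f (p # t) = f (fst p) (snd p) + tsum f t"
  by (cases p) (simp add: tsum_def)
lemma tsum_append[simp]: "tsum f (s @ t) = tsum f s + tsum f t"
  by (induction s) (auto simp: algebra_simps)
lemma tsum_add: "tsum (\<lambda>u v. f u v + g u v) t = tsum f t + tsum g t"
  by (induction t) (auto simp: algebra_simps)
lemma tsum_zero[simp]: "tsum (\<lambda>u v. 0) t = 0"
  by (induction t) auto
lemma tsum_map: "tsum f (map h t) = tsum (\<lambda>u v. f (fst (h (u, v))) (snd (h (u, v)))) t"
  by (induction t) auto
lemma tsum_concat: "tsum f (concat (map h t)) = tsum (\<lambda>u v. tsum f (h (u, v))) t"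
  by (induction t) auto
lemma tsum_swap: "tsum (\<lambda>u v. tsum (F u v) t2) t1 = tsum (\<lambda>p q. tsum (\<lambda>u v. F u v p q) t1) t2"
  by (induction t1) (simp_all add: tsum_add)

lemma additive_zero: "(\<And>a b. f (a + b) = f a + f b) \<Longrightarrow> f (0::'a::monoid_add) = (0::'b::ab_group_add)"
proof -
  assume h: "\<And>a b. f (a + b) = f a + f b"
  have "f 0 + f 0 = f 0 + 0" using h[of 0 0] by simp
  then show ?thesis by (simp only: add_left_cancel)
qed

lemma tsum_push: assumes "\<And>a b. f (a + b) = f a + f b"
  shows "f (tsum F t) = tsum (\<lambda>u v. f (F u v)) t"
  using assms additive_zero[of f, OF assms] by (induction t) auto

lemma tsum_cong: "(\<And>u v. (u, v) \<in> set t \<Longrightarrow> F u v = G u v) \<Longrightarrow> tsum F t = tsum G t"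
  by (induction t) auto

locale hopf =
  fixes scale :: "'k::field \<Rightarrow> 'a::ring_1 \<Rightarrow> 'a"
    and \<Delta> :: "'a \<Rightarrow> ('a \<times> 'a) list"
    and \<epsilon> :: "'a \<Rightarrow> 'k"
    and S :: "'a \<Rightarrow> 'a"
  assumes hopf: "hopf_algebra scale \<Delta> \<epsilon> S"
    and cocom: "cocommutative scale \<Delta>"
begin

definition D :: "'a \<Rightarrow> ('a \<Rightarrow> 'a \<Rightarrow> 'v::ab_group_add) \<Rightarrow> 'v" where
  "D x F = tsum F (\<Delta> x)"

definition linv :: "('k \<Rightarrow> 'v::ab_group_add \<Rightarrow> 'v) \<Rightarrow> ('a \<Rightarrow> 'v) \<Rightarrow> bool" where
  "linv sv f \<longleftrightarrow> (\<forall>x y. f (x + y) = f x + f y) \<and> (\<forall>c x. f (scale c x) = sv c (f x))"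

definition bilv :: "('k \<Rightarrow> 'v::ab_group_add \<Rightarrow> 'v) \<Rightarrow> ('a \<Rightarrow> 'a \<Rightarrow> 'v) \<Rightarrow> bool" where
  "bilv sv F \<longleftrightarrow> (\<forall>x. linv sv (F x)) \<and> (\<forall>y. linv sv (\<lambda>x. F x y))"

definition triv :: "('k \<Rightarrow> 'v::ab_group_add \<Rightarrow> 'v) \<Rightarrow> ('a \<Rightarrow> 'a \<Rightarrow> 'a \<Rightarrow> 'v) \<Rightarrow> bool" where
  "triv sv G \<longleftrightarrow> (\<forall>x y. linv sv (G x y)) \<and> (\<forall>x z. linv sv (\<lambda>y. G x y z)) \<and>
     (\<forall>y z. linv sv (\<lambda>x. G x y z))"

definition quadv :: "('k \<Rightarrow> 'v::ab_group_add \<Rightarrow> 'v) \<Rightarrow> ('a \<Rightarrow> 'a \<Rightarrow> 'a \<Rightarrow> 'a \<Rightarrow> 'v) \<Rightarrow> bool" where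
  "quadv sv H \<longleftrightarrow> (\<forall>x y z. linv sv (H x y z)) \<and> (\<forall>x y w. linv sv (\<lambda>z. H x y z w)) \<and>
     (\<forall>x z w. linv sv (\<lambda>y. H x y z w)) \<and> (\<forall>y z w. linv sv (\<lambda>x. H x y z w))"

abbreviation lin :: "('a \<Rightarrow> 'a) \<Rightarrow> bool" where "lin \<equiv> linv scale"

lemma kalg: "k_algebra scale" using hopf by (simp add: hopf_algebra_def)
lemma vsA: "vector_space scale" using kalg by (simp add: k_algebra_def)
lemma scale_mult_left: "scale c x * y = scale c (x * y)" using kalg by (simp add: k_algebra_def)
lemma scale_mult_right: "x * scale c y = scale c (x * y)" using kalg unfolding k_algebra_def by metis

lemma D_add_teq: "teq scale (\<Delta> (x + y)) (\<Delta> x @ \<Delta> y)" using hopf by (simp add: hopf_algebra_def)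
lemma D_scale_teq: "teq scale (\<Delta> (scale c x)) (map (\<lambda>(u, v). (scale c u, v)) (\<Delta> x))"
  using hopf by (simp add: hopf_algebra_def)
lemma eps_linear: "Vector_Spaces.linear scale (*) \<epsilon>" using hopf by (simp add: hopf_algebra_def)
lemma coassocK: "k_trilinear scale g \<Longrightarrow>
        tsum (\<lambda>u v. tsum (\<lambda>p q. g p q v) (\<Delta> u)) (\<Delta> x) =
        tsum (\<lambda>u v. tsum (\<lambda>p q. g u p q) (\<Delta> v)) (\<Delta> x)" using hopf by (simp add: hopf_algebra_def)
lemma counit1: "tsum (\<lambda>u v. scale (\<epsilon> u) v) (\<Delta> x) = x" using hopf by (simp add: hopf_algebra_def)
lemma counit2: "tsum (\<lambda>u v. scale (\<epsilon> v) u) (\<Delta> x) = x" using hopf by (simp add: hopf_algebra_def)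
lemma mult_teq: "teq scale (\<Delta> (x * y))
        (concat (map (\<lambda>(u, v). map (\<lambda>(p, q). (u * p, v * q)) (\<Delta> y)) (\<Delta> x)))"
  using hopf by (simp add: hopf_algebra_def)
lemma one_teq: "teq scale (\<Delta> 1) [(1, 1)]" using hopf by (simp add: hopf_algebra_def)
lemma eps_mult: "\<epsilon> (x * y) = \<epsilon> x * \<epsilon> y" using hopf by (simp add: hopf_algebra_def)
lemma eps_one: "\<epsilon> 1 = 1" using hopf by (simp add: hopf_algebra_def)
lemma S_linear: "Vector_Spaces.linear scale scale S" using hopf by (simp add: hopf_algebra_def)
lemma antipode1: "tsum (\<lambda>u v. u * S v) (\<Delta> x) = scale (\<epsilon> x) 1" using hopf by (simp add: hopf_algebra_def)
lemma antipode2: "tsum (\<lambda>u v. S u * v) (\<Delta> x) = scale (\<epsilon> x) 1" using hopf by (simp add: hopf_algebra_def)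
lemma cocom_teq: "teq scale (\<Delta> x) (map prod.swap (\<Delta> x))" using cocom by (simp add: cocommutative_def)

lemma linv_iff: "vector_space sv \<Longrightarrow> linv sv f \<longleftrightarrow> Vector_Spaces.linear scale sv f"
  using vsA by (simp add: linv_def linear_iff)

lemma linv_add: "linv sv f \<Longrightarrow> f (x + y) = f x + f y" by (simp add: linv_def)
lemma linv_scale: "linv sv f \<Longrightarrow> f (scale c x) = sv c (f x)" by (simp add: linv_def)

lemma eps_add: "\<epsilon> (x + y) = \<epsilon> x + \<epsilon> y" using eps_linear by (simp add: linear_iff)
lemma eps_scale: "\<epsilon> (scale c x) = c * \<epsilon> x" using eps_linear by (simp add: linear_iff)
lemma S_add: "S (x + y) = S x + S y" using S_linear by (simp add: linear_iff)
lemma S_scale: "S (scale c x) = scale c (S x)" using S_linear by (simp add: linear_iff)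

lemma vs_add: "vector_space sv \<Longrightarrow> sv c (a + b) = sv c a + sv c b"
  by (simp add: vector_space.vector_space_assms(1))

lemma teq_bil:
  fixes sv :: "'k \<Rightarrow> 'v::ab_group_add \<Rightarrow> 'v"
  assumes vs: "vector_space sv" and st: "teq scale s t" and F: "bilv sv F"
  shows "tsum F s = tsum F t"
proof -
  have "tsum F s - tsum F t = 0"
  proof (rule sep[OF vs])
    fix \<phi> :: "'v \<Rightarrow> 'k" assume l: "Vector_Spaces.linear sv (*) \<phi>"
    then have ad: "\<And>a b. \<phi> (a + b) = \<phi> a + \<phi> b" and sc: "\<And>c a. \<phi> (sv c a) = c * \<phi> a"
      by (auto simp: linear_iff)
    have "k_bilinear scale (\<lambda>u v. \<phi> (F u v))"
      unfolding k_bilinear_def using F vs vsK vsA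
    proof (intro conjI allI)
      fix x show "Vector_Spaces.linear scale (*) (\<lambda>v. \<phi> (F x v))"
        using F vs vsK vsA unfolding bilv_def linv_def linear_iff by (simp add: ad sc)
    next
      fix y show "Vector_Spaces.linear scale (*) (\<lambda>u. \<phi> (F u y))"
        using F vs vsK vsA unfolding bilv_def linv_def linear_iff by (simp add: ad sc)
    qed
    with st have "tsum (\<lambda>u v. \<phi> (F u v)) s = tsum (\<lambda>u v. \<phi> (F u v)) t"
      by (simp add: teq_def)
    moreover have "\<phi> (tsum F s - tsum F t) = \<phi> (tsum F s) - \<phi> (tsum F t)"
      using ad[of "tsum F s - tsum F t" "tsum F t"] by (simp add: eq_diff_eq)
    ultimately show "\<phi> (tsum F s - tsum F t) = 0"
      by (simp add: tsum_push[OF ad])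
  qed
  then show ?thesis by simp
qed

end

context hopf begin

lemma D_push: "(\<And>a b. f (a + b) = f a + f b) \<Longrightarrow> f (D x G) = D x (\<lambda>u v. f (G u v))"
  unfolding D_def by (rule tsum_push)
lemma D_add_fun: "D x (\<lambda>u v. F u v + G u v) = D x F + D x G"
  unfolding D_def by (rule tsum_add)
lemma D_zero[simp]: "D x (\<lambda>u v. 0) = 0" unfolding D_def by simp
lemma D_swap: "D x (\<lambda>u v. D y (F u v)) = D y (\<lambda>p q. D x (\<lambda>u v. F u v p q))"
  unfolding D_def by (rule tsum_swap)

lemma D_sv: "vector_space sv \<Longrightarrow> sv c (D x G) = D x (\<lambda>u v. sv c (G u v))"
  by (rule D_push) (simp add: vs_add)

lemma D_linx_add: assumes "vector_space sv" "bilv sv F" shows "D (x + y) F = D x F + D y F"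
  using teq_bil[OF assms(1) D_add_teq assms(2)] unfolding D_def by simp

lemma D_linx_scale: assumes vs: "vector_space sv" and F: "bilv sv F" shows "D (scale c x) F = sv c (D x F)"
proof -
  have "D (scale c x) F = tsum F (map (\<lambda>(u, v). (scale c u, v)) (\<Delta> x))"
    using teq_bil[OF vs D_scale_teq F] unfolding D_def by simp
  also have "\<dots> = D x (\<lambda>u v. F (scale c u) v)" by (simp add: tsum_map D_def)
  also have "\<dots> = D x (\<lambda>u v. sv c (F u v))" using F by (simp add: bilv_def linv_def)
  also have "\<dots> = sv c (D x F)" using D_sv[OF vs] by simp
  finally show ?thesis .
qed

lemma linv_D_arg: assumes "vector_space sv" "bilv sv F" "lin f" shows "linv sv (\<lambda>x. D (f x) F)"
  using assms D_linx_add[OF assms(1,2)] D_linx_scale[OF assms(1,2)] by (simp add: linv_def)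

lemma linv_D_param: assumes "vector_space sv" "\<And>u v. linv sv (\<lambda>y. F y u v)" shows "linv sv (\<lambda>y. D x (F y))"
proof -
  have "D x (F (a + b)) = D x (F a) + D x (F b)" for a b
  proof -
    have "F (a + b) = (\<lambda>u v. F a u v + F b u v)" using assms(2) by (intro ext) (simp add: linv_def)
    then show ?thesis using D_add_fun[of x "F a" "F b"] by simp
  qed
  moreover have "D x (F (scale c a)) = sv c (D x (F a))" for c a
  proof -
    have "F (scale c a) = (\<lambda>u v. sv c (F a u v))" using assms(2) by (intro ext) (simp add: linv_def)
    then show ?thesis using D_sv[OF assms(1)] by simp
  qed
  ultimately show ?thesis by (simp add: linv_def)
qed

lemma D_coassoc: fixes G :: "'a \<Rightarrow> 'a \<Rightarrow> 'a \<Rightarrow> 'v::ab_group_add"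
  assumes vs: "vector_space sv" and G: "triv sv G"
  shows "D x (\<lambda>u v. D u (\<lambda>p q. G p q v)) = D x (\<lambda>u v. D v (\<lambda>p q. G u p q))"
proof -
  let ?L = "D x (\<lambda>u v. D u (\<lambda>p q. G p q v))" and ?R = "D x (\<lambda>u v. D v (\<lambda>p q. G u p q))"
  have "?L - ?R = 0"
  proof (rule sep[OF vs])
    fix \<phi> :: "'v \<Rightarrow> 'k" assume l: "Vector_Spaces.linear sv (*) \<phi>"
    then have ad: "\<And>a b. \<phi> (a + b) = \<phi> a + \<phi> b" and sc: "\<And>c a. \<phi> (sv c a) = c * \<phi> a"
      by (auto simp: linear_iff)
    have "k_trilinear scale (\<lambda>u v w. \<phi> (G u v w))"
      unfolding k_trilinear_def using G vs vsK vsA unfolding triv_def linv_def linear_iff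
      by (simp add: ad sc)
    from coassocK[OF this, of x]
    have "\<phi> ?L = \<phi> ?R" unfolding D_def by (simp add: tsum_push[of \<phi>, OF ad])
    moreover have "\<phi> (?L - ?R) = \<phi> ?L - \<phi> ?R"
      using ad[of "?L - ?R" "?R"] by (simp add: eq_diff_eq)
    ultimately show "\<phi> (?L - ?R) = 0" by simp
  qed
  then show ?thesis by simp
qed

lemma D_mult: assumes vs: "vector_space sv" and F: "bilv sv F"
  shows "D (x * y) F = D x (\<lambda>u v. D y (\<lambda>p q. F (u * p) (v * q)))"
  using teq_bil[OF vs mult_teq F] unfolding D_def by (simp add: tsum_concat tsum_map case_prod_beta)

lemma D_one: assumes vs: "vector_space sv" and F: "bilv sv F" shows "D 1 F = F 1 1"
  using teq_bil[OF vs one_teq F] unfolding D_def by simp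

lemma D_cocom: assumes vs: "vector_space sv" and F: "bilv sv F" shows "D x F = D x (\<lambda>u v. F v u)"
  using teq_bil[OF vs cocom_teq F] unfolding D_def by (simp add: tsum_map)

lemma D_counit1: "linv sv f \<Longrightarrow> D x (\<lambda>u v. sv (\<epsilon> u) (f v)) = f x"
  using D_push[of f x "\<lambda>u v. scale (\<epsilon> u) v"] counit1[of x] by (simp add: linv_def D_def)
lemma D_counit2: "linv sv f \<Longrightarrow> D x (\<lambda>u v. sv (\<epsilon> v) (f u)) = f x"
  using D_push[of f x "\<lambda>u v. scale (\<epsilon> v) u"] counit2[of x] by (simp add: linv_def D_def)

lemma D_anti1: "D x (\<lambda>u v. u * S v) = scale (\<epsilon> x) 1" using antipode1 by (simp add: D_def)
lemma D_anti2: "D x (\<lambda>u v. S u * v) = scale (\<epsilon> x) 1" using antipode2 by (simp add: D_def)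

end

context hopf begin

lemma lin_id: "lin (\<lambda>x. x)" by (simp add: linv_def)
lemma lin_mult_l: "lin f \<Longrightarrow> lin (\<lambda>x. a * f x)"
  by (simp add: linv_def distrib_left scale_mult_right)
lemma lin_mult_r: "lin f \<Longrightarrow> lin (\<lambda>x. f x * a)"
  by (simp add: linv_def distrib_right scale_mult_left)
lemma lin_S: "lin f \<Longrightarrow> lin (\<lambda>x. S (f x))"
  by (simp add: linv_def S_add S_scale)
lemma linv_bil1: "bilv sv F \<Longrightarrow> lin f \<Longrightarrow> linv sv (\<lambda>x. F (f x) c)"
  by (simp add: linv_def bilv_def)
lemma linv_bil2: "bilv sv F \<Longrightarrow> lin f \<Longrightarrow> linv sv (\<lambda>x. F c (f x))"
  by (simp add: linv_def bilv_def)
lemma linv_tri1: "triv sv F \<Longrightarrow> lin f \<Longrightarrow> linv sv (\<lambda>x. F (f x) b c)"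
  by (simp add: linv_def triv_def)
lemma linv_tri2: "triv sv F \<Longrightarrow> lin f \<Longrightarrow> linv sv (\<lambda>x. F a (f x) c)"
  by (simp add: linv_def triv_def)
lemma linv_tri3: "triv sv F \<Longrightarrow> lin f \<Longrightarrow> linv sv (\<lambda>x. F a b (f x))"
  by (simp add: linv_def triv_def)
lemma linv_quad1: "quadv sv F \<Longrightarrow> lin f \<Longrightarrow> linv sv (\<lambda>x. F (f x) b c d)"
  by (simp add: linv_def quadv_def)
lemma linv_quad2: "quadv sv F \<Longrightarrow> lin f \<Longrightarrow> linv sv (\<lambda>x. F a (f x) c d)"
  by (simp add: linv_def quadv_def)
lemma linv_quad3: "quadv sv F \<Longrightarrow> lin f \<Longrightarrow> linv sv (\<lambda>x. F a b (f x) d)"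
  by (simp add: linv_def quadv_def)
lemma linv_quad4: "quadv sv F \<Longrightarrow> lin f \<Longrightarrow> linv sv (\<lambda>x. F a b c (f x))"
  by (simp add: linv_def quadv_def)
lemma linv_D_arg': "vector_space sv \<Longrightarrow> bilv sv F \<Longrightarrow> lin f \<Longrightarrow> linv sv (\<lambda>x. D (f x) F)"
  by (rule linv_D_arg)
lemma linv_D_param': "vector_space sv \<Longrightarrow> (\<And>u v. linv sv (\<lambda>y. F y u v)) \<Longrightarrow> linv sv (\<lambda>y. D x (F y))"
  by (rule linv_D_param)
lemma bilvI: "(\<And>x. linv sv (F x)) \<Longrightarrow> (\<And>y. linv sv (\<lambda>x. F x y)) \<Longrightarrow> bilv sv F"
  by (simp add: bilv_def)
lemma trivI: "(\<And>x y. linv sv (G x y)) \<Longrightarrow> (\<And>x z. linv sv (\<lambda>y. G x y z)) \<Longrightarrow>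
   (\<And>y z. linv sv (\<lambda>x. G x y z)) \<Longrightarrow> triv sv G"
  by (simp add: triv_def)
lemma quadvI: "(\<And>x y z. linv sv (H x y z)) \<Longrightarrow> (\<And>x y w. linv sv (\<lambda>z. H x y z w)) \<Longrightarrow>
   (\<And>x z w. linv sv (\<lambda>y. H x y z w)) \<Longrightarrow> (\<And>y z w. linv sv (\<lambda>x. H x y z w)) \<Longrightarrow> quadv sv H"
  by (simp add: quadv_def)
lemma linv_sv: "vector_space sv \<Longrightarrow> linv sv f \<Longrightarrow> linv sv (\<lambda>x. sv c (f x))"
  by (simp add: linv_def vs_add vector_space.vector_space_assms(3) mult.commute)

lemmas L = lin_id lin_mult_l lin_mult_r lin_S linv_D_param' linv_D_arg' bilvI trivI quadvI vsA vsK
lemmas BR = linv_bil1 linv_bil2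
lemmas TR = linv_tri1 linv_tri2 linv_tri3
lemmas QR = linv_quad1 linv_quad2 linv_quad3 linv_quad4

end

context hopf begin

definition D3 :: "'a \<Rightarrow> ('a \<Rightarrow> 'a \<Rightarrow> 'a \<Rightarrow> 'v::ab_group_add) \<Rightarrow> 'v" where
  "D3 x G = D x (\<lambda>u v. D u (\<lambda>p q. G p q v))"

definition D4 :: "'a \<Rightarrow> ('a \<Rightarrow> 'a \<Rightarrow> 'a \<Rightarrow> 'a \<Rightarrow> 'v::ab_group_add) \<Rightarrow> 'v" where
  "D4 x H = D x (\<lambda>u v. D u (\<lambda>a b. D v (\<lambda>c d. H a b c d)))"

lemma D3_alt: assumes "vector_space sv" "triv sv G"
  shows "D3 x G = D x (\<lambda>u v. D v (\<lambda>p q. G u p q))"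
  unfolding D3_def by (rule D_coassoc[OF assms])

lemma D4_last: "D4 x H = D3 x (\<lambda>a b w. D w (\<lambda>c d. H a b c d))"
  unfolding D3_def D4_def ..

lemma D4_first: assumes vs: "vector_space sv" and H: "quadv sv H"
  shows "D4 x H = D3 x (\<lambda>w c d. D w (\<lambda>a b. H a b c d))"
proof -
  have "triv sv (\<lambda>w c d. D w (\<lambda>a b. H a b c d))"
    by (insert vs, intro trivI; (rule L QR[OF H] | assumption)+)
  then have "D3 x (\<lambda>w c d. D w (\<lambda>a b. H a b c d)) = D x (\<lambda>w v. D v (\<lambda>c d. D w (\<lambda>a b. H a b c d)))"
    by (rule D3_alt[OF vs])
  also have "\<dots> = D4 x H" unfolding D4_def by (subst D_swap) (rule refl)
  finally show ?thesis ..
qed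

lemma D4_13: assumes vs: "vector_space sv" and H: "quadv sv H"
  shows "D4 x H = D x (\<lambda>a v. D3 v (\<lambda>b c d. H a b c d))"
proof -
  have t1: "triv sv (\<lambda>b c d. H a b c d)" for a
    by (insert vs, intro trivI; (rule L QR[OF H] | assumption)+)
  have t2: "triv sv (\<lambda>a b w. D w (\<lambda>c d. H a b c d))"
    by (insert vs, intro trivI; (rule L QR[OF H] | assumption)+)
  have "D x (\<lambda>a v. D3 v (\<lambda>b c d. H a b c d)) = D x (\<lambda>a v. D v (\<lambda>b w. D w (\<lambda>c d. H a b c d)))"
    by (simp add: D3_alt[OF vs t1])
  also have "\<dots> = D3 x (\<lambda>a b w. D w (\<lambda>c d. H a b c d))"
    by (rule D3_alt[OF vs t2, symmetric])
  also have "\<dots> = D4 x H" by (rule D4_last[symmetric])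
  finally show ?thesis ..
qed

lemma D4_mid: assumes vs: "vector_space sv" and H: "quadv sv H"
  shows "D4 x H = D3 x (\<lambda>a w d. D w (\<lambda>b c. H a b c d))"
proof -
  have t: "triv sv (\<lambda>a w d. D w (\<lambda>b c. H a b c d))"
    by (insert vs, intro trivI; (rule L QR[OF H] | assumption)+)
  show ?thesis unfolding D3_alt[OF vs t] D4_13[OF vs H] D3_def ..
qed

lemma D4_swap12: assumes vs: "vector_space sv" and H: "quadv sv H"
  shows "D4 x H = D4 x (\<lambda>a b c d. H b a c d)"
proof -
  have "D u (\<lambda>a b. D v (\<lambda>c d. H a b c d)) = D u (\<lambda>a b. D v (\<lambda>c d. H b a c d))" for u v
    by (rule D_cocom[OF vs]) (insert vs, intro bilvI; (rule L QR[OF H] | assumption)+)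
  then show ?thesis unfolding D4_def by simp
qed

lemma D4_swap34: assumes vs: "vector_space sv" and H: "quadv sv H"
  shows "D4 x H = D4 x (\<lambda>a b c d. H a b d c)"
proof -
  have "D v (\<lambda>c d. H a b c d) = D v (\<lambda>c d. H a b d c)" for a b v
    by (rule D_cocom[OF vs]) (insert vs, intro bilvI; (rule L QR[OF H] | assumption)+)
  then show ?thesis unfolding D4_def by simp
qed

lemma D4_swap23: assumes vs: "vector_space sv" and H: "quadv sv H"
  shows "D4 x H = D4 x (\<lambda>a b c d. H a c b d)"
proof -
  have H': "quadv sv (\<lambda>a b c d. H a c b d)" using H by (simp add: quadv_def)
  have "D w (\<lambda>b c. H a b c d) = D w (\<lambda>b c. H a c b d)" for a w d
    by (rule D_cocom[OF vs]) (insert vs, intro bilvI; (rule L QR[OF H] | assumption)+)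
  then show ?thesis unfolding D4_mid[OF vs H] D4_mid[OF vs H'] by simp
qed

lemma D3_swap12: assumes vs: "vector_space sv" and G: "triv sv G"
  shows "D3 x G = D3 x (\<lambda>a b c. G b a c)"
proof -
  have "D u (\<lambda>p q. G p q v) = D u (\<lambda>p q. G q p v)" for u v
    by (rule D_cocom[OF vs]) (insert vs, intro bilvI; (rule L TR[OF G] | assumption)+)
  then show ?thesis unfolding D3_def by simp
qed

lemma D3_swap23: assumes vs: "vector_space sv" and G: "triv sv G"
  shows "D3 x G = D3 x (\<lambda>a b c. G a c b)"
proof -
  have G': "triv sv (\<lambda>a b c. G a c b)" using G by (simp add: triv_def)
  have "D v (\<lambda>p q. G u p q) = D v (\<lambda>p q. G u q p)" for u v
    by (rule D_cocom[OF vs]) (insert vs, intro bilvI; (rule L TR[OF G] | assumption)+)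
  then show ?thesis unfolding D3_alt[OF vs G] D3_alt[OF vs G'] by simp
qed

end

context hopf begin

lemma contr1: "linv sv f \<Longrightarrow> D x (\<lambda>a b. f (a * S b)) = sv (\<epsilon> x) (f 1)"
  using D_push[of f x "\<lambda>a b. a * S b"] D_anti1[of x] by (simp add: linv_def)
lemma contr2: "linv sv f \<Longrightarrow> D x (\<lambda>a b. f (S a * b)) = sv (\<epsilon> x) (f 1)"
  using D_push[of f x "\<lambda>a b. S a * b"] D_anti2[of x] by (simp add: linv_def)

lemma L3a: assumes vs: "vector_space sv" and f: "bilv sv f"
  shows "D3 x (\<lambda>a b c. f a (b * S c)) = f x 1"
proof -
  have t: "triv sv (\<lambda>a b c. f a (b * S c))"
    by (insert vs, intro trivI; (rule L BR[OF f] | assumption)+)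
  have "D3 x (\<lambda>a b c. f a (b * S c)) = D x (\<lambda>a w. D w (\<lambda>b c. f a (b * S c)))"
    by (rule D3_alt[OF vs t])
  also have "\<dots> = D x (\<lambda>a w. sv (\<epsilon> w) (f a 1))"
  proof -
    have "D w (\<lambda>b c. f a (b * S c)) = sv (\<epsilon> w) (f a 1)" for a w
      using f contr1[of sv "f a" w] by (simp add: bilv_def)
    then show ?thesis by simp
  qed
  also have "\<dots> = f x 1" using f D_counit2[of sv "\<lambda>a. f a 1" x] by (simp add: bilv_def)
  finally show ?thesis .
qed

lemma L3b: assumes vs: "vector_space sv" and f: "bilv sv f"
  shows "D3 x (\<lambda>a b c. f a (S b * c)) = f x 1"
proof -
  have t: "triv sv (\<lambda>a b c. f a (S b * c))"
    by (insert vs, intro trivI; (rule L BR[OF f] | assumption)+)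
  have "D3 x (\<lambda>a b c. f a (S b * c)) = D x (\<lambda>a w. D w (\<lambda>b c. f a (S b * c)))"
    by (rule D3_alt[OF vs t])
  also have "\<dots> = D x (\<lambda>a w. sv (\<epsilon> w) (f a 1))"
  proof -
    have "D w (\<lambda>b c. f a (S b * c)) = sv (\<epsilon> w) (f a 1)" for a w
      using f contr2[of sv "f a" w] by (simp add: bilv_def)
    then show ?thesis by simp
  qed
  also have "\<dots> = f x 1" using f D_counit2[of sv "\<lambda>a. f a 1" x] by (simp add: bilv_def)
  finally show ?thesis .
qed

lemma L3c: assumes vs: "vector_space sv" and f: "bilv sv f"
  shows "D3 x (\<lambda>a b c. f (a * S b) c) = f 1 x"
proof -
  have "D3 x (\<lambda>a b c. f (a * S b) c) = D x (\<lambda>w c. D w (\<lambda>a b. f (a * S b) c))"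
    by (simp add: D3_def)
  also have "\<dots> = D x (\<lambda>w c. sv (\<epsilon> w) (f 1 c))"
  proof -
    have "D w (\<lambda>a b. f (a * S b) c) = sv (\<epsilon> w) (f 1 c)" for c w
      using f contr1[of sv "\<lambda>m. f m c" w] by (simp add: bilv_def)
    then show ?thesis by simp
  qed
  also have "\<dots> = f 1 x" using f by (simp add: D_counit1 bilv_def)
  finally show ?thesis .
qed

lemma L3d: assumes vs: "vector_space sv" and f: "bilv sv f"
  shows "D3 x (\<lambda>a b c. f (S a * b) c) = f 1 x"
proof -
  have "D3 x (\<lambda>a b c. f (S a * b) c) = D x (\<lambda>w c. D w (\<lambda>a b. f (S a * b) c))"
    by (simp add: D3_def)
  also have "\<dots> = D x (\<lambda>w c. sv (\<epsilon> w) (f 1 c))"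
  proof -
    have "D w (\<lambda>a b. f (S a * b) c) = sv (\<epsilon> w) (f 1 c)" for c w
      using f contr2[of sv "\<lambda>m. f m c" w] by (simp add: bilv_def)
    then show ?thesis by simp
  qed
  also have "\<dots> = f 1 x" using f by (simp add: D_counit1 bilv_def)
  finally show ?thesis .
qed

lemma S_one: "S 1 = 1"
proof -
  have b: "bilv scale (\<lambda>u v. u * S v)" by (intro bilvI; (rule L | assumption)+)
  have "D 1 (\<lambda>u v. u * S v) = 1 * S 1" by (rule D_one[OF vsA b])
  moreover have "D 1 (\<lambda>u v. u * S v) = 1" by (simp add: D_anti1 eps_one vector_space.vector_space_assms(4)[OF vsA])
  ultimately show ?thesis by simp
qed

end

context hopf begin

lemma scale_scale: "scale a (scale b z) = scale (a * b) z"
  using vsA by (simp add: vector_space.vector_space_assms(3))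

lemma S_mult: "S (x * y) = S y * S x"
proof -
  define E where "E = D3 x (\<lambda>x1 x2 x3. D3 y (\<lambda>y1 y2 y3. S (x1 * y1) * (x2 * y2) * S y3 * S x3))"
  have i: "D3 y (\<lambda>y1 y2 y3. S (x1 * y1) * (x2 * y2) * S y3 * S x3) = S (x1 * y) * x2 * S x3" for x1 x2 x3
  proof -
    have f: "bilv scale (\<lambda>a m. S (x1 * a) * x2 * m * S x3)" by (intro bilvI; (rule L | assumption)+)
    from L3a[OF vsA f, of y] show ?thesis by (simp add: mult.assoc)
  qed
  have "E = D3 x (\<lambda>x1 x2 x3. S (x1 * y) * x2 * S x3)" by (simp add: E_def i)
  also have "\<dots> = S (x * y)"
  proof -
    have f: "bilv scale (\<lambda>a m. S (a * y) * m)" by (intro bilvI; (rule L | assumption)+)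
    from L3a[OF vsA f, of x] show ?thesis by (simp add: mult.assoc)
  qed
  finally have Ea: "E = S (x * y)" .
  have "E = D x (\<lambda>u x3. D u (\<lambda>x1 x2. D y (\<lambda>w y3. D w (\<lambda>y1 y2. S (x1 * y1) * (x2 * y2) * S y3 * S x3))))"
    by (simp add: E_def D3_def)
  also have "\<dots> = D x (\<lambda>u x3. D y (\<lambda>w y3. D u (\<lambda>x1 x2. D w (\<lambda>y1 y2. S (x1 * y1) * (x2 * y2) * S y3 * S x3))))"
    by (subst D_swap) (rule refl)
  also have "\<dots> = D x (\<lambda>u x3. D y (\<lambda>w y3. scale (\<epsilon> u) (scale (\<epsilon> w) (S y3 * S x3))))"
  proof -
    have "D u (\<lambda>x1 x2. D w (\<lambda>y1 y2. S (x1 * y1) * (x2 * y2) * S y3 * S x3))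
       = scale (\<epsilon> u) (scale (\<epsilon> w) (S y3 * S x3))" for u w x3 y3
    proof -
      have g: "bilv scale (\<lambda>p q. S p * q * S y3 * S x3)" by (intro bilvI; (rule L | assumption)+)
      have "D u (\<lambda>x1 x2. D w (\<lambda>y1 y2. S (x1 * y1) * (x2 * y2) * S y3 * S x3))
          = D (u * w) (\<lambda>p q. S p * q * S y3 * S x3)"
        by (rule D_mult[OF vsA g, symmetric])
      also have "\<dots> = scale (\<epsilon> (u * w)) (1 * S y3 * S x3)"
        by (rule contr2) (rule L)+
      finally show ?thesis by (simp add: eps_mult scale_scale)
    qed
    then show ?thesis by simp
  qed
  also have "\<dots> = D x (\<lambda>u x3. scale (\<epsilon> u) (S y * S x3))"
  proof -
    have "D y (\<lambda>w y3. scale (\<epsilon> u) (scale (\<epsilon> w) (S y3 * S x3))) = scale (\<epsilon> u) (S y * S x3)" for u x3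
    proof -
      have "D y (\<lambda>w y3. scale (\<epsilon> u) (scale (\<epsilon> w) (S y3 * S x3))) = scale (\<epsilon> u) (D y (\<lambda>w y3. scale (\<epsilon> w) (S y3 * S x3)))"
        by (rule D_sv[OF vsA, symmetric])
      also have "D y (\<lambda>w y3. scale (\<epsilon> w) (S y3 * S x3)) = S y * S x3"
        by (rule D_counit1[of scale "\<lambda>t. S t * S x3"]) (rule L)+
      finally show ?thesis .
    qed
    then show ?thesis by simp
  qed
  also have "\<dots> = S y * S x"
    by (rule D_counit1[of scale "\<lambda>t. S y * S t"]) (rule L)+
  finally show ?thesis using Ea by simp
qed

end

context hopf begin

lemma S_S: "S (S x) = x"
proof -
  define E where "E = D3 x (\<lambda>a b c. S (S a) * S b * c)"
  have "E = S (S x)"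
  proof -
    have f: "bilv scale (\<lambda>a m. S (S a) * m)" by (intro bilvI; (rule L | assumption)+)
    from L3b[OF vsA f, of x] show ?thesis by (simp add: mult.assoc E_def)
  qed
  moreover have "E = x"
  proof -
    have t: "triv scale (\<lambda>a b c. S (b * S a) * c)" by (intro trivI; (rule L | assumption)+)
    have "E = D3 x (\<lambda>a b c. S (b * S a) * c)" by (simp add: E_def S_mult)
    also have "\<dots> = D3 x (\<lambda>a b c. S (a * S b) * c)" by (rule D3_swap12[OF vsA t])
    also have "\<dots> = S 1 * x"
    proof -
      have f: "bilv scale (\<lambda>m c. S m * c)" by (intro bilvI; (rule L | assumption)+)
      from L3c[OF vsA f, of x] show ?thesis by simp
    qed
    finally show ?thesis by (simp add: S_one)
  qed
  ultimately show ?thesis by simp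
qed

lemma D_linx_D: assumes vs: "vector_space sv" and F: "bilv sv F"
  shows "D (D x G) F = D x (\<lambda>u v. D (G u v) F)"
  by (rule D_push) (rule D_linx_add[OF vs F])

lemma D3_swapD: "D3 w (\<lambda>a b c. D y (\<lambda>s t. K a b c s t)) = D y (\<lambda>s t. D3 w (\<lambda>a b c. K a b c s t))"
  unfolding D3_def by (simp only: D_swap[of _ y])

lemma lin_eps: "vector_space sv \<Longrightarrow> linv sv (\<lambda>q. sv (\<epsilon> q) z)"
  by (simp add: linv_def eps_add eps_scale vector_space.vector_space_assms(2,3))

end

context hopf begin

lemma sv_comm: "vector_space sv \<Longrightarrow> sv a (sv b z) = sv b (sv a z)"
  by (simp add: vector_space.vector_space_assms(3) mult.commute)

lemma D_S: assumes vs: "vector_space sv" and F: "bilv sv F"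
  shows "D (S x) F = D x (\<lambda>u v. F (S u) (S v))"
proof -
  have lS: "lin S" by (rule L)+
  have step1: "D (S x) F = D x (\<lambda>u w. sv (\<epsilon> w) (D (S u) F))"
  proof -
    have "S x = D x (\<lambda>u w. scale (\<epsilon> w) (S u))" using D_counit2[OF lS, of x] by simp
    then have "D (S x) F = D x (\<lambda>u w. D (scale (\<epsilon> w) (S u)) F)" by (simp add: D_linx_D[OF vs F])
    also have "\<dots> = D x (\<lambda>u w. sv (\<epsilon> w) (D (S u) F))" by (simp add: D_linx_scale[OF vs F])
    finally show ?thesis .
  qed
  have step2: "sv (\<epsilon> w) (D (S u) F) = D3 w (\<lambda>a b c. D (S u * a) (\<lambda>s t. F (s * S b) (t * S c)))" for u w
  proof -
    have "D3 w (\<lambda>a b c. D (S u * a) (\<lambda>s t. F (s * S b) (t * S c)))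
        = D3 w (\<lambda>a b c. D (S u) (\<lambda>s1 t1. D a (\<lambda>s2 t2. F (s1 * s2 * S b) (t1 * t2 * S c))))"
    proof -
      have "D (S u * a) (\<lambda>s t. F (s * S b) (t * S c)) = D (S u) (\<lambda>s1 t1. D a (\<lambda>s2 t2. F (s1 * s2 * S b) (t1 * t2 * S c)))" for a b c
      proof -
        have bl: "bilv sv (\<lambda>s t. F (s * S b) (t * S c))"
          by (insert vs, intro bilvI; (rule L BR[OF F] | assumption)+)
        show ?thesis by (rule D_mult[OF vs bl])
      qed
      then show ?thesis by simp
    qed
    also have "\<dots> = D (S u) (\<lambda>s1 t1. D3 w (\<lambda>a b c. D a (\<lambda>s2 t2. F (s1 * s2 * S b) (t1 * t2 * S c))))"
      by (rule D3_swapD)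
    also have "\<dots> = D (S u) (\<lambda>s1 t1. sv (\<epsilon> w) (F s1 t1))"
    proof -
      have "D3 w (\<lambda>a b c. D a (\<lambda>s2 t2. F (s1 * s2 * S b) (t1 * t2 * S c))) = sv (\<epsilon> w) (F s1 t1)" for s1 t1
      proof -
        define Q where "Q = (\<lambda>s2 t2 b c. F (s1 * s2 * S b) (t1 * t2 * S c))"
        have Q: "quadv sv Q" unfolding Q_def
          by (insert vs, intro quadvI; (rule L BR[OF F] | assumption)+)
        have Q': "quadv sv (\<lambda>a b c d. Q a c b d)" using Q by (simp add: quadv_def)
        have "D3 w (\<lambda>a b c. D a (\<lambda>s2 t2. F (s1 * s2 * S b) (t1 * t2 * S c))) = D4 w Q"
          using D4_first[OF vs Q, of w] by (simp add: Q_def)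
        also have "\<dots> = D4 w (\<lambda>a b c d. Q a c b d)" by (rule D4_swap23[OF vs Q])
        also have "\<dots> = D w (\<lambda>p q. D p (\<lambda>s2 b. D q (\<lambda>t2 c. F (s1 * s2 * S b) (t1 * t2 * S c))))"
          unfolding D4_def Q_def ..
        also have "\<dots> = D w (\<lambda>p q. sv (\<epsilon> p) (sv (\<epsilon> q) (F s1 t1)))"
        proof -
          have "D p (\<lambda>s2 b. D q (\<lambda>t2 c. F (s1 * s2 * S b) (t1 * t2 * S c))) = sv (\<epsilon> p) (sv (\<epsilon> q) (F s1 t1))" for p q
          proof -
            have "D q (\<lambda>t2 c. F (s1 * s2 * S b) (t1 * t2 * S c)) = sv (\<epsilon> q) (F (s1 * s2 * S b) t1)" for s2 b
            proof -
              have l: "linv sv (\<lambda>m. F (s1 * s2 * S b) (t1 * m))" by (rule BR[OF F] L)+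
              from contr1[OF l, of q] show ?thesis by (simp add: mult.assoc)
            qed
            then have "D p (\<lambda>s2 b. D q (\<lambda>t2 c. F (s1 * s2 * S b) (t1 * t2 * S c)))
                = D p (\<lambda>s2 b. sv (\<epsilon> q) (F (s1 * s2 * S b) t1))" by simp
            also have "\<dots> = sv (\<epsilon> q) (D p (\<lambda>s2 b. F (s1 * s2 * S b) t1))" by (rule D_sv[OF vs, symmetric])
            also have "D p (\<lambda>s2 b. F (s1 * s2 * S b) t1) = sv (\<epsilon> p) (F s1 t1)"
            proof -
              have l: "linv sv (\<lambda>m. F (s1 * m) t1)" by (rule BR[OF F] L)+
              from contr1[OF l, of p] show ?thesis by (simp add: mult.assoc)
            qed
            finally show ?thesis by (simp add: sv_comm[OF vs])
          qed
          then show ?thesis by simp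
        qed
        also have "\<dots> = sv (\<epsilon> w) (F s1 t1)"
          by (rule D_counit1) (rule lin_eps[OF vs])
        finally show ?thesis .
      qed
      then show ?thesis by simp
    qed
    also have "\<dots> = sv (\<epsilon> w) (D (S u) F)" by (rule D_sv[OF vs, symmetric])
    finally show ?thesis ..
  qed
  have step3: "D x (\<lambda>u w. D3 w (\<lambda>a b c. D (S u * a) (\<lambda>s t. F (s * S b) (t * S c)))) = D x (\<lambda>u v. F (S u) (S v))"
  proof -
    define H where "H = (\<lambda>u a b c. D (S u * a) (\<lambda>s t. F (s * S b) (t * S c)))"
    have H: "quadv sv H" unfolding H_def
      by (insert vs, intro quadvI; (rule L BR[OF F] | assumption)+)
    have "D x (\<lambda>u w. D3 w (\<lambda>a b c. D (S u * a) (\<lambda>s t. F (s * S b) (t * S c)))) = D4 x H"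
      using D4_13[OF vs H, of x] by (simp add: H_def)
    also have "\<dots> = D3 x (\<lambda>m b c. D m (\<lambda>u a. H u a b c))" by (rule D4_first[OF vs H])
    also have "\<dots> = D3 x (\<lambda>m b c. sv (\<epsilon> m) (F (S b) (S c)))"
    proof -
      have "D m (\<lambda>u a. H u a b c) = sv (\<epsilon> m) (F (S b) (S c))" for m b c
      proof -
        have bl: "bilv sv (\<lambda>s t. F (s * S b) (t * S c))"
          by (insert vs, intro bilvI; (rule L BR[OF F] | assumption)+)
        have l: "linv sv (\<lambda>z. D z (\<lambda>s t. F (s * S b) (t * S c)))"
          by (rule linv_D_arg[OF vs bl]) (rule L)
        from contr2[OF l, of m] show ?thesis by (simp add: H_def D_one[OF vs bl])
      qed
      then show ?thesis by simp
    qed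
    also have "\<dots> = D x (\<lambda>w c. D w (\<lambda>m b. sv (\<epsilon> m) (F (S b) (S c))))" by (simp add: D3_def)
    also have "\<dots> = D x (\<lambda>w c. F (S w) (S c))"
    proof -
      have "D w (\<lambda>m b. sv (\<epsilon> m) (F (S b) (S c))) = F (S w) (S c)" for w c
        by (rule D_counit1) (rule BR[OF F] L)+
      then show ?thesis by simp
    qed
    finally show ?thesis .
  qed
  show ?thesis using step1 step2 step3 by simp
qed

end

context hopf begin

definition br :: "'a \<Rightarrow> 'a \<Rightarrow> 'a" where "br a b = D a (\<lambda>u v. D b (\<lambda>p q. u * p * S v * S q))"
definition ad :: "'a \<Rightarrow> 'a \<Rightarrow> 'a" where "ad c d = D c (\<lambda>u v. u * d * S v)"

lemma Fpush1: "bilv sv F \<Longrightarrow> F (D x G) y = D x (\<lambda>u v. F (G u v) y)"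
  by (rule D_push) (simp add: bilv_def linv_def)
lemma Fpush2: "bilv sv F \<Longrightarrow> F y (D x G) = D x (\<lambda>u v. F y (G u v))"
  by (rule D_push) (simp add: bilv_def linv_def)

lemma D_mult4S: assumes vs: "vector_space sv" and F: "bilv sv F"
  shows "D (u * p * S v * S q) F = D u (\<lambda>u1 u2. D p (\<lambda>p1 p2. D v (\<lambda>v1 v2. D q (\<lambda>q1 q2.
            F (u1 * p1 * S v1 * S q1) (u2 * p2 * S v2 * S q2)))))"
proof -
  have b1: "bilv sv (\<lambda>s t. D q (\<lambda>q1 q2. F (s * S q1) (t * S q2)))"
    by (insert vs, intro bilvI; (rule L BR[OF F] | assumption)+)
  have b2: "bilv sv (\<lambda>s t. D v (\<lambda>v1 v2. D q (\<lambda>q1 q2. F (s * S v1 * S q1) (t * S v2 * S q2))))"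
    by (insert vs, intro bilvI; (rule L BR[OF F] | assumption)+)
  have bS: "bilv sv (\<lambda>s' t'. F (s * s') (t * t'))" for s t
    by (insert vs, intro bilvI; (rule L BR[OF F] | assumption)+)
  have bS2: "bilv sv (\<lambda>s' t'. D q (\<lambda>q1 q2. F (s * s' * S q1) (t * t' * S q2)))" for s t
    by (insert vs, intro bilvI; (rule L BR[OF F] | assumption)+)
  have "D (u * p * S v * S q) F = D (u * p * S v) (\<lambda>s t. D (S q) (\<lambda>s' t'. F (s * s') (t * t')))"
    by (rule D_mult[OF vs F])
  also have "\<dots> = D (u * p * S v) (\<lambda>s t. D q (\<lambda>q1 q2. F (s * S q1) (t * S q2)))"
    by (simp add: D_S[OF vs bS])
  also have "\<dots> = D (u * p) (\<lambda>s t. D (S v) (\<lambda>s' t'. D q (\<lambda>q1 q2. F (s * s' * S q1) (t * t' * S q2))))"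
    by (rule D_mult[OF vs b1])
  also have "\<dots> = D (u * p) (\<lambda>s t. D v (\<lambda>v1 v2. D q (\<lambda>q1 q2. F (s * S v1 * S q1) (t * S v2 * S q2))))"
    by (simp add: D_S[OF vs bS2])
  also have "\<dots> = D u (\<lambda>u1 u2. D p (\<lambda>p1 p2. D v (\<lambda>v1 v2. D q (\<lambda>q1 q2.
            F (u1 * p1 * S v1 * S q1) (u2 * p2 * S v2 * S q2)))))"
    by (rule D_mult[OF vs b2])
  finally show ?thesis .
qed

end

context hopf begin

lemma linv_D4_param: "vector_space sv \<Longrightarrow> (\<And>a b c d. linv sv (\<lambda>y. H y a b c d)) \<Longrightarrow> linv sv (\<lambda>y. D4 x (H y))"
  unfolding D4_def by (rule L | assumption)+

lemma D_br: assumes vs: "vector_space sv" and F: "bilv sv F"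
  shows "D (br a b) F = D a (\<lambda>u v. D b (\<lambda>p q. F (br u p) (br v q)))"
proof -
  have "D (br a b) F = D a (\<lambda>u v. D b (\<lambda>p q. D (u * p * S v * S q) F))"
    unfolding br_def by (simp add: D_linx_D[OF vs F])
  also have "\<dots> = D a (\<lambda>u v. D b (\<lambda>p q. D u (\<lambda>u1 u2. D p (\<lambda>p1 p2. D v (\<lambda>v1 v2. D q (\<lambda>q1 q2.
            F (u1 * p1 * S v1 * S q1) (u2 * p2 * S v2 * S q2)))))))"
    by (simp add: D_mult4S[OF vs F])
  also have "\<dots> = D a (\<lambda>u v. D u (\<lambda>u1 u2. D v (\<lambda>v1 v2. D b (\<lambda>p q. D p (\<lambda>p1 p2. D q (\<lambda>q1 q2.
            F (u1 * p1 * S v1 * S q1) (u2 * p2 * S v2 * S q2)))))))"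
  proof -
    have "D b (\<lambda>p q. D u (\<lambda>u1 u2. D p (\<lambda>p1 p2. D v (\<lambda>v1 v2. D q (\<lambda>q1 q2.
            F (u1 * p1 * S v1 * S q1) (u2 * p2 * S v2 * S q2)))))) =
          D u (\<lambda>u1 u2. D v (\<lambda>v1 v2. D b (\<lambda>p q. D p (\<lambda>p1 p2. D q (\<lambda>q1 q2.
            F (u1 * p1 * S v1 * S q1) (u2 * p2 * S v2 * S q2))))))" for u v
      by (simp only: D_swap[where y=v]; simp only: D_swap[where y=u])
    then show ?thesis by simp
  qed
  also have "\<dots> = D4 a (\<lambda>u1 u2 v1 v2. D4 b (\<lambda>p1 p2 q1 q2. F (u1 * p1 * S v1 * S q1) (u2 * p2 * S v2 * S q2)))"
    by (simp add: D4_def)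
  also have "\<dots> = D4 a (\<lambda>u1 u2 v1 v2. D4 b (\<lambda>p1 p2 q1 q2. F (u1 * p1 * S v1 * S p2) (u2 * q1 * S v2 * S q2)))"
  proof -
    have "D4 b (\<lambda>p1 p2 q1 q2. F (u1 * p1 * S v1 * S q1) (u2 * p2 * S v2 * S q2)) =
          D4 b (\<lambda>p1 p2 q1 q2. F (u1 * p1 * S v1 * S p2) (u2 * q1 * S v2 * S q2))" for u1 u2 v1 v2
    proof -
      have Q: "quadv sv (\<lambda>p1 p2 q1 q2. F (u1 * p1 * S v1 * S q1) (u2 * p2 * S v2 * S q2))"
        by (insert vs, intro quadvI; (rule L BR[OF F] | assumption)+)
      from D4_swap23[OF vs Q, of b] show ?thesis by simp
    qed
    then show ?thesis by simp
  qed
  also have "\<dots> = D4 a (\<lambda>u1 u2 v1 v2. D4 b (\<lambda>p1 p2 q1 q2. F (u1 * p1 * S u2 * S p2) (v1 * q1 * S v2 * S q2)))"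
  proof -
    have Q: "quadv sv (\<lambda>u1 u2 v1 v2. D4 b (\<lambda>p1 p2 q1 q2. F (u1 * p1 * S v1 * S p2) (u2 * q1 * S v2 * S q2)))"
      by (insert vs, intro quadvI; (rule L linv_D4_param BR[OF F] | assumption)+)
    from D4_swap23[OF vs Q, of a] show ?thesis by simp
  qed
  also have "\<dots> = D a (\<lambda>u v. D u (\<lambda>u1 u2. D v (\<lambda>v1 v2. D b (\<lambda>p q. D p (\<lambda>p1 p2. D q (\<lambda>q1 q2.
            F (u1 * p1 * S u2 * S p2) (v1 * q1 * S v2 * S q2)))))))"
    by (simp add: D4_def)
  also have "\<dots> = D a (\<lambda>u v. D b (\<lambda>p q. F (br u p) (br v q)))"
  proof -
    have "D u (\<lambda>u1 u2. D v (\<lambda>v1 v2. D b (\<lambda>p q. D p (\<lambda>p1 p2. D q (\<lambda>q1 q2.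
            F (u1 * p1 * S u2 * S p2) (v1 * q1 * S v2 * S q2)))))) = D b (\<lambda>p q. F (br u p) (br v q))" for u v
      unfolding br_def
      by (simp only: Fpush1[OF F]; simp only: Fpush2[OF F]; simp only: D_swap[where y=v]; simp only: D_swap[where y=u])
    then show ?thesis by simp
  qed
  finally show ?thesis .
qed

end

context hopf begin

lemma D_mult2S: assumes vs: "vector_space sv" and F: "bilv sv F"
  shows "D (u * a * S v) F = D u (\<lambda>u1 u2. D a (\<lambda>a1 a2. D v (\<lambda>v1 v2. F (u1 * a1 * S v1) (u2 * a2 * S v2))))"
proof -
  have b1: "bilv sv (\<lambda>s t. D v (\<lambda>v1 v2. F (s * S v1) (t * S v2)))"
    by (insert vs, intro bilvI; (rule L BR[OF F] | assumption)+)
  have bS: "bilv sv (\<lambda>s' t'. F (s * s') (t * t'))" for s t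
    by (insert vs, intro bilvI; (rule L BR[OF F] | assumption)+)
  have "D (u * a * S v) F = D (u * a) (\<lambda>s t. D (S v) (\<lambda>s' t'. F (s * s') (t * t')))"
    by (rule D_mult[OF vs F])
  also have "\<dots> = D (u * a) (\<lambda>s t. D v (\<lambda>v1 v2. F (s * S v1) (t * S v2)))"
    by (simp add: D_S[OF vs bS])
  also have "\<dots> = D u (\<lambda>u1 u2. D a (\<lambda>a1 a2. D v (\<lambda>v1 v2. F (u1 * a1 * S v1) (u2 * a2 * S v2))))"
    by (rule D_mult[OF vs b1])
  finally show ?thesis .
qed

lemma D_ad: assumes vs: "vector_space sv" and F: "bilv sv F"
  shows "D (ad c a) F = D c (\<lambda>u v. D a (\<lambda>p q. F (ad u p) (ad v q)))"
proof -
  have "D (ad c a) F = D c (\<lambda>u v. D (u * a * S v) F)"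
    unfolding ad_def by (simp add: D_linx_D[OF vs F])
  also have "\<dots> = D c (\<lambda>u v. D u (\<lambda>u1 u2. D a (\<lambda>a1 a2. D v (\<lambda>v1 v2. F (u1 * a1 * S v1) (u2 * a2 * S v2)))))"
    by (simp add: D_mult2S[OF vs F])
  also have "\<dots> = D c (\<lambda>u v. D u (\<lambda>u1 u2. D v (\<lambda>v1 v2. D a (\<lambda>a1 a2. F (u1 * a1 * S v1) (u2 * a2 * S v2)))))"
  proof -
    have "D u (\<lambda>u1 u2. D a (\<lambda>a1 a2. D v (\<lambda>v1 v2. F (u1 * a1 * S v1) (u2 * a2 * S v2)))) =
          D u (\<lambda>u1 u2. D v (\<lambda>v1 v2. D a (\<lambda>a1 a2. F (u1 * a1 * S v1) (u2 * a2 * S v2))))" for u v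
      by (simp only: D_swap[where y=v]; simp only: D_swap[where y=u])
    then show ?thesis by simp
  qed
  also have "\<dots> = D4 c (\<lambda>u1 u2 v1 v2. D a (\<lambda>a1 a2. F (u1 * a1 * S v1) (u2 * a2 * S v2)))"
    by (simp add: D4_def)
  also have "\<dots> = D4 c (\<lambda>u1 u2 v1 v2. D a (\<lambda>a1 a2. F (u1 * a1 * S u2) (v1 * a2 * S v2)))"
  proof -
    have Q: "quadv sv (\<lambda>u1 u2 v1 v2. D a (\<lambda>a1 a2. F (u1 * a1 * S v1) (u2 * a2 * S v2)))"
      by (insert vs, intro quadvI; (rule L BR[OF F] | assumption)+)
    from D4_swap23[OF vs Q, of c] show ?thesis by simp
  qed
  also have "\<dots> = D c (\<lambda>u v. D u (\<lambda>u1 u2. D v (\<lambda>v1 v2. D a (\<lambda>a1 a2. F (u1 * a1 * S u2) (v1 * a2 * S v2)))))"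
    by (simp add: D4_def)
  also have "\<dots> = D c (\<lambda>u v. D a (\<lambda>p q. F (ad u p) (ad v q)))"
  proof -
    have "D u (\<lambda>u1 u2. D v (\<lambda>v1 v2. D a (\<lambda>a1 a2. F (u1 * a1 * S u2) (v1 * a2 * S v2)))) =
          D a (\<lambda>p q. F (ad u p) (ad v q))" for u v
      unfolding ad_def
      by (simp only: Fpush1[OF F]; simp only: Fpush2[OF F]; simp only: D_swap[where y=v]; simp only: D_swap[where y=u])
    then show ?thesis by simp
  qed
  finally show ?thesis .
qed

lemma Mpush1: "D x G * (z::'a) = D x (\<lambda>u v. G u v * z)"
  by (rule D_push[where f="\<lambda>m. m * z"]) (simp add: distrib_right)
lemma Mpush2: "(z::'a) * D x G = D x (\<lambda>u v. z * G u v)"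
  by (rule D_push[where f="\<lambda>m. z * m"]) (simp add: distrib_left)

lemma ad_one: "ad c 1 = scale (\<epsilon> c) 1"
  unfolding ad_def by (simp add: D_anti1)

lemma ad_push: "ad c (D x G) = D x (\<lambda>u v. ad c (G u v))"
proof (rule D_push)
  fix a b show "ad c (a + b) = ad c a + ad c b"
    unfolding ad_def by (simp add: distrib_left distrib_right D_add_fun)
qed

lemma lin_ad: "lin f \<Longrightarrow> lin (\<lambda>x. ad c (f x))"
  unfolding ad_def by (rule L | assumption)+

lemma lin_ad_c: "lin (\<lambda>x. ad x d)"
  unfolding ad_def by (rule L | assumption)+

lemma ad_S: "S (ad c x) = ad c (S x)"
proof -
  have "S (ad c x) = D c (\<lambda>u v. S (u * x * S v))"
    unfolding ad_def by (rule D_push) (rule S_add)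
  also have "\<dots> = D c (\<lambda>u v. v * S x * S u)" by (simp add: S_mult S_S mult.assoc)
  also have "\<dots> = D c (\<lambda>u v. u * S x * S v)"
    by (rule D_cocom[OF vsA]) (intro bilvI; (rule L | assumption)+)
  finally show ?thesis unfolding ad_def .
qed

lemma ad_mult: "ad c (x * y) = D c (\<lambda>p r. ad p x * ad r y)"
proof -
  have "D c (\<lambda>p r. ad p x * ad r y) = D c (\<lambda>p r. D p (\<lambda>p1 p2. D r (\<lambda>r1 r2. p1 * x * S p2 * (r1 * y * S r2))))"
    unfolding ad_def by (simp only: Mpush1; simp only: Mpush2)
  also have "\<dots> = D4 c (\<lambda>p1 p2 r1 r2. p1 * x * S p2 * (r1 * y * S r2))" by (simp add: D4_def)
  also have "\<dots> = D3 c (\<lambda>a w d. D w (\<lambda>b cc. a * x * S b * (cc * y * S d)))"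
  proof -
    have Q: "quadv scale (\<lambda>p1 p2 r1 r2. p1 * x * S p2 * (r1 * y * S r2))"
      by (intro quadvI; (rule L | assumption)+)
    show ?thesis by (rule D4_mid[OF vsA Q])
  qed
  also have "\<dots> = D3 c (\<lambda>a w d. scale (\<epsilon> w) (a * x * y * S d))"
  proof -
    have "D w (\<lambda>b cc. a * x * S b * (cc * y * S d)) = scale (\<epsilon> w) (a * x * y * S d)" for a w d
    proof -
      have l: "lin (\<lambda>m. a * x * m * y * S d)" by (rule L)+
      from contr2[OF l, of w] show ?thesis by (simp add: mult.assoc)
    qed
    then show ?thesis by simp
  qed
  also have "\<dots> = D c (\<lambda>u d. u * x * y * S d)"
  proof -
    have "D u (\<lambda>a w. scale (\<epsilon> w) (a * x * y * S d)) = u * x * y * S d" for u d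
      by (rule D_counit2) (rule L)+
    then show ?thesis by (simp add: D3_def)
  qed
  finally show ?thesis unfolding ad_def by (simp add: mult.assoc)
qed

end

context hopf begin

lemma ad4: "D4 c (\<lambda>c1 c2 c3 c4. ad c1 x1 * ad c2 x2 * ad c3 x3 * ad c4 x4) = ad c (x1 * x2 * x3 * x4)"
proof -
  have Q: "quadv scale (\<lambda>c1 c2 c3 c4. ad c1 x1 * ad c2 x2 * ad c3 x3 * ad c4 x4)"
    by (intro quadvI; (rule L lin_ad_c | assumption)+)
  have "D4 c (\<lambda>c1 c2 c3 c4. ad c1 x1 * ad c2 x2 * ad c3 x3 * ad c4 x4)
      = D3 c (\<lambda>w c3 c4. D w (\<lambda>c1 c2. ad c1 x1 * ad c2 x2 * ad c3 x3 * ad c4 x4))"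
    by (rule D4_first[OF vsA Q])
  also have "\<dots> = D3 c (\<lambda>w c3 c4. ad w (x1 * x2) * ad c3 x3 * ad c4 x4)"
    by (simp add: ad_mult Mpush1)
  also have "\<dots> = D c (\<lambda>m c4. D m (\<lambda>w c3. ad w (x1 * x2) * ad c3 x3 * ad c4 x4))"
    by (simp add: D3_def)
  also have "\<dots> = D c (\<lambda>m c4. ad m (x1 * x2 * x3) * ad c4 x4)"
    by (simp add: ad_mult[of _ "x1 * x2" x3] Mpush1)
  also have "\<dots> = ad c (x1 * x2 * x3 * x4)"
    by (simp add: ad_mult[of _ "x1 * x2 * x3" x4])
  finally show ?thesis .
qed

lemma ad_br: "ad c (br a b) = D c (\<lambda>u v. br (ad u a) (ad v b))"
proof -
  have pw: "br (ad u a) (ad v b) = D u (\<lambda>u1 u2. D v (\<lambda>v1 v2. D a (\<lambda>a1 a2. D b (\<lambda>b1 b2.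
              ad u1 a1 * ad v1 b1 * ad u2 (S a2) * ad v2 (S b2)))))" for u v
  proof -
    have b1: "bilv scale (\<lambda>x1 x2. D (ad v b) (\<lambda>y1 y2. x1 * y1 * S x2 * S y2))"
      by (intro bilvI; (rule L | assumption)+)
    have s2: "D (ad v b) (\<lambda>y1 y2. X * y1 * Z * S y2) = D v (\<lambda>v1 v2. D b (\<lambda>b1 b2. X * ad v1 b1 * Z * S (ad v2 b2)))" for X Z
    proof -
      have b2: "bilv scale (\<lambda>y1 y2. X * y1 * Z * S y2)" by (intro bilvI; (rule L | assumption)+)
      show ?thesis by (rule D_ad[OF vsA b2])
    qed
    have "br (ad u a) (ad v b) = D u (\<lambda>u1 u2. D a (\<lambda>a1 a2. D (ad v b) (\<lambda>y1 y2. ad u1 a1 * y1 * S (ad u2 a2) * S y2)))"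
      unfolding br_def by (rule D_ad[OF vsA b1])
    also have "\<dots> = D u (\<lambda>u1 u2. D a (\<lambda>a1 a2. D v (\<lambda>v1 v2. D b (\<lambda>b1 b2.
              ad u1 a1 * ad v1 b1 * ad u2 (S a2) * ad v2 (S b2)))))"
      by (simp only: s2 ad_S)
    also have "\<dots> = D u (\<lambda>u1 u2. D v (\<lambda>v1 v2. D a (\<lambda>a1 a2. D b (\<lambda>b1 b2.
              ad u1 a1 * ad v1 b1 * ad u2 (S a2) * ad v2 (S b2)))))"
      by (simp only: D_swap[where y=v]; simp only: D_swap[where y=u])
    finally show ?thesis .
  qed
  have "D c (\<lambda>u v. br (ad u a) (ad v b)) = D4 c (\<lambda>u1 u2 v1 v2. D a (\<lambda>a1 a2. D b (\<lambda>b1 b2.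
              ad u1 a1 * ad v1 b1 * ad u2 (S a2) * ad v2 (S b2))))"
    by (simp add: pw D4_def)
  also have "\<dots> = D4 c (\<lambda>u1 u2 v1 v2. D a (\<lambda>a1 a2. D b (\<lambda>b1 b2.
              ad u1 a1 * ad u2 b1 * ad v1 (S a2) * ad v2 (S b2))))"
  proof -
    have Q: "quadv scale (\<lambda>u1 u2 v1 v2. D a (\<lambda>a1 a2. D b (\<lambda>b1 b2.
              ad u1 a1 * ad v1 b1 * ad u2 (S a2) * ad v2 (S b2))))"
      by (intro quadvI; (rule L lin_ad_c | assumption)+)
    from D4_swap23[OF vsA Q, of c] show ?thesis by simp
  qed
  also have "\<dots> = D a (\<lambda>a1 a2. D b (\<lambda>b1 b2. D4 c (\<lambda>c1 c2 c3 c4. ad c1 a1 * ad c2 b1 * ad c3 (S a2) * ad c4 (S b2))))"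
    unfolding D4_def by (simp only: D_swap[where y=b]; simp only: D_swap[where y=a])
  also have "\<dots> = D a (\<lambda>a1 a2. D b (\<lambda>b1 b2. ad c (a1 * b1 * S a2 * S b2)))"
    by (simp only: ad4)
  also have "\<dots> = ad c (br a b)"
    unfolding br_def by (simp only: ad_push)
  finally show ?thesis ..
qed

lemma S_br: "S (br a b) = br b a"
proof -
  have Sp: "S (D x G) = D x (\<lambda>u v. S (G u v))" for x G
    by (rule D_push) (rule S_add)
  have "S (br a b) = D a (\<lambda>u v. D b (\<lambda>p q. q * v * S p * S u))"
    unfolding br_def by (simp add: Sp S_mult S_S mult.assoc)
  also have "\<dots> = D a (\<lambda>u v. D b (\<lambda>p q. p * v * S q * S u))"
  proof -
    have "D b (\<lambda>p q. q * v * S p * S u) = D b (\<lambda>p q. p * v * S q * S u)" for u v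
      by (rule D_cocom[OF vsA]) (intro bilvI; (rule L | assumption)+)
    then show ?thesis by simp
  qed
  also have "\<dots> = D a (\<lambda>u v. D b (\<lambda>p q. p * u * S q * S v))"
    by (rule D_cocom[OF vsA]) (intro bilvI; (rule L | assumption)+)
  also have "\<dots> = br b a" unfolding br_def by (rule D_swap)
  finally show ?thesis .
qed

end

context hopf begin

lemma br_swap: "br b a = D b (\<lambda>u v. ad u (br a (S v)))"
proof -
  define H where "H = (\<lambda>u1 u2 v1 v2. D a (\<lambda>a1 a2. u1 * (a1 * S v1 * S a2 * v2) * S u2))"
  have H: "quadv scale H" unfolding H_def by (intro quadvI; (rule L | assumption)+)
  have H': "quadv scale (\<lambda>a b c d. H a c b d)" using H by (simp add: quadv_def)
  have pw: "ad u (br a (S v)) = D u (\<lambda>u1 u2. D v (\<lambda>v1 v2. H u1 u2 v1 v2))" for u v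
  proof -
    have bl: "bilv scale (\<lambda>p q. a1 * p * S a2 * S q)" for a1 a2 by (intro bilvI; (rule L | assumption)+)
    have "ad u (br a (S v)) = ad u (D a (\<lambda>a1 a2. D v (\<lambda>v1 v2. a1 * S v1 * S a2 * S (S v2))))"
      unfolding br_def by (simp only: D_S[OF vsA bl])
    also have "\<dots> = D a (\<lambda>a1 a2. D v (\<lambda>v1 v2. D u (\<lambda>u1 u2. u1 * (a1 * S v1 * S a2 * v2) * S u2)))"
      by (simp only: ad_push S_S, simp only: ad_def)
    also have "\<dots> = D u (\<lambda>u1 u2. D v (\<lambda>v1 v2. D a (\<lambda>a1 a2. u1 * (a1 * S v1 * S a2 * v2) * S u2)))"
      by (simp only: D_swap[where y=v]; simp only: D_swap[where y=u])
    finally show ?thesis by (simp add: H_def)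
  qed
  have "D b (\<lambda>u v. ad u (br a (S v))) = D4 b H" by (simp add: pw D4_def)
  also have "\<dots> = D4 b (\<lambda>a b c d. H a c b d)" by (rule D4_swap23[OF vsA H])
  also have "\<dots> = D4 b (\<lambda>a b c d. H a d b c)" using D4_swap34[OF vsA H', of b] by simp
  also have "\<dots> = D4 b (\<lambda>c1 c2 c3 c4. D a (\<lambda>a1 a2. c1 * a1 * S c2 * S a2) * (c3 * S c4))"
    unfolding H_def by (simp add: Mpush1 mult.assoc)
  also have "\<dots> = D3 b (\<lambda>c1 c2 w. D w (\<lambda>c3 c4. D a (\<lambda>a1 a2. c1 * a1 * S c2 * S a2) * (c3 * S c4)))"
    by (rule D4_last)
  also have "\<dots> = D3 b (\<lambda>c1 c2 w. scale (\<epsilon> w) (D a (\<lambda>a1 a2. c1 * a1 * S c2 * S a2)))"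
  proof -
    have "D w (\<lambda>c3 c4. K * (c3 * S c4)) = scale (\<epsilon> w) K" for w K
    proof -
      have l: "lin (\<lambda>m. K * m)" by (rule L)+
      from contr1[OF l, of w] show ?thesis by simp
    qed
    then show ?thesis by simp
  qed
  also have "\<dots> = D b (\<lambda>u w. scale (\<epsilon> w) (D u (\<lambda>c1 c2. D a (\<lambda>a1 a2. c1 * a1 * S c2 * S a2))))"
    unfolding D3_def by (simp add: D_sv[OF vsA])
  also have "\<dots> = D b (\<lambda>c1 c2. D a (\<lambda>a1 a2. c1 * a1 * S c2 * S a2))"
    by (rule D_counit2) (rule linv_D_arg[OF vsA] L | intro bilvI)+
  also have "\<dots> = br b a" unfolding br_def ..
  finally show ?thesis ..
qed

end


lemma subalgebra_gen: "subalgebra scale (generated_subalgebra scale G)"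
  unfolding subalgebra_def generated_subalgebra_def by auto

lemma gen_base: "G \<subseteq> generated_subalgebra scale G"
  unfolding generated_subalgebra_def by auto

lemma gen_induct: "subalgebra scale P \<Longrightarrow> G \<subseteq> P \<Longrightarrow> generated_subalgebra scale G \<subseteq> P"
  unfolding generated_subalgebra_def by auto

context hopf begin

lemma zero_in: "subalgebra scale B \<Longrightarrow> 0 \<in> B"
proof -
  assume "subalgebra scale B"
  then have "scale 0 1 \<in> B" unfolding subalgebra_def by blast
  moreover have "scale 0 1 = (0::'a)" using vector_space.scale_eq_0_iff[OF vsA] by simp
  ultimately show ?thesis by simp
qed

lemma tsum_in: "subalgebra scale B \<Longrightarrow> (\<And>u v. (u, v) \<in> set t \<Longrightarrow> F u v \<in> B) \<Longrightarrow> tsum F t \<in> B"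
proof (induction t)
  case Nil then show ?case by (simp add: zero_in)
next
  case (Cons p t) then show ?case by (cases p) (auto simp: subalgebra_def)
qed

lemma D_in: "subalgebra scale B \<Longrightarrow> (\<And>u v. F u v \<in> B) \<Longrightarrow> D x F \<in> B"
  unfolding D_def by (rule tsum_in) auto

lemma br_eq: "hopf_bracket \<Delta> S a b = br a b"
  by (simp add: hopf_bracket_def br_def D_def)

lemma ad_eq: "tsum (\<lambda>u v. u * d * S v) (\<Delta> a) = ad a d"
  by (simp add: ad_def D_def)

lemma teq_iff: "teq scale s t \<longleftrightarrow> (\<forall>f. bilv (*) f \<longrightarrow> tsum f s = tsum f t)"
  unfolding teq_def k_bilinear_def bilv_def using linv_iff[OF vsK] by simp

lemma lin_br1: "lin f \<Longrightarrow> lin (\<lambda>x. br (f x) p)"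
  unfolding br_def by (rule L | assumption)+
lemma lin_br2: "lin f \<Longrightarrow> lin (\<lambda>x. br u (f x))"
  unfolding br_def by (rule L | assumption)+

lemma main:
  assumes NX: "normal_hopf_subalgebra scale \<Delta> S X" and NY: "normal_hopf_subalgebra scale \<Delta> S Y"
  shows "normal_hopf_subalgebra scale \<Delta> S (hopf_commutator scale \<Delta> S X Y)"
proof -
  define G where "G = {hopf_bracket \<Delta> S a b | a b. a \<in> X \<and> b \<in> Y}"
  define C where "C = generated_subalgebra scale G"
  have Ceq: "hopf_commutator scale \<Delta> S X Y = C" by (simp add: C_def G_def hopf_commutator_def)
  have subC: "subalgebra scale C" unfolding C_def by (rule subalgebra_gen)
  have GC: "br a b \<in> C" if "a \<in> X" "b \<in> Y" for a b
    using gen_base[of G scale] that unfolding C_def G_def by (auto simp: br_eq)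
  have adX: "ad c a \<in> X" if "a \<in> X" for c a
    using NX that unfolding normal_hopf_subalgebra_def by (simp add: ad_eq)
  have adY: "ad c a \<in> Y" if "a \<in> Y" for c a
    using NY that unfolding normal_hopf_subalgebra_def by (simp add: ad_eq)
  have SY: "S b \<in> Y" if "b \<in> Y" for b
    using NY that unfolding normal_hopf_subalgebra_def hopf_subalgebra_def by auto
  have "\<forall>a\<in>X. \<exists>t. set t \<subseteq> X \<times> X \<and> teq scale (\<Delta> a) t"
    using NX unfolding normal_hopf_subalgebra_def hopf_subalgebra_def by blast
  from bchoice[OF this] obtain tX where tX: "\<And>a. a \<in> X \<Longrightarrow> set (tX a) \<subseteq> X \<times> X \<and> teq scale (\<Delta> a) (tX a)"
    by blast
  have "\<forall>a\<in>Y. \<exists>t. set t \<subseteq> Y \<times> Y \<and> teq scale (\<Delta> a) t"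
    using NY unfolding normal_hopf_subalgebra_def hopf_subalgebra_def by blast
  from bchoice[OF this] obtain tY where tY: "\<And>a. a \<in> Y \<Longrightarrow> set (tY a) \<subseteq> Y \<times> Y \<and> teq scale (\<Delta> a) (tY a)"
    by blast
  have C_add: "x + y \<in> C" "x * y \<in> C" "scale k x \<in> C" if "x \<in> C" "y \<in> C" for x y k
    using subC that unfolding subalgebra_def by auto
  have C_one: "1 \<in> C" using subC unfolding subalgebra_def by auto

  have normC: "ad c d \<in> C" if "d \<in> C" for c d
  proof -
    define P where "P = {d \<in> C. \<forall>c. ad c d \<in> C}"
    have "subalgebra scale P" unfolding subalgebra_def
    proof (intro conjI ballI allI)
      show "1 \<in> P" unfolding P_def using C_one C_add(3)[OF C_one C_one] by (simp add: ad_one)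
    next
      fix x y assume "x \<in> P" "y \<in> P"
      then have x: "x \<in> C" "\<And>c. ad c x \<in> C" and y: "y \<in> C" "\<And>c. ad c y \<in> C" by (auto simp: P_def)
      have la: "lin (ad c)" for c using lin_ad[OF lin_id] by simp
      show "x + y \<in> P" unfolding P_def using x y C_add(1) linv_add[OF la] by auto
      show "x * y \<in> P" unfolding P_def using x y C_add(2)
        by (auto simp: ad_mult intro!: D_in[OF subC])
    next
      fix k x assume "x \<in> P"
      then have x: "x \<in> C" "\<And>c. ad c x \<in> C" by (auto simp: P_def)
      have la: "lin (ad c)" for c using lin_ad[OF lin_id] by simp
      show "scale k x \<in> P" unfolding P_def using x C_add(3)[OF x(1) x(1)] C_add(3)[OF x(2) x(2)] linv_scale[OF la]
        by auto
    qed
    moreover have "G \<subseteq> P"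
    proof
      fix g assume "g \<in> G"
      then obtain a b where ab: "a \<in> X" "b \<in> Y" "g = br a b" by (auto simp: G_def br_eq)
      have "ad c (br a b) \<in> C" for c
        unfolding ad_br by (rule D_in[OF subC]) (intro GC adX adY ab)
      then show "g \<in> P" unfolding P_def using GC[OF ab(1,2)] ab(3) by auto
    qed
    ultimately have "C \<subseteq> P" unfolding C_def by (rule gen_induct)
    then show ?thesis using that by (auto simp: P_def)
  qed

  have SC: "S d \<in> C" if "d \<in> C" for d
  proof -
    define P where "P = {d \<in> C. S d \<in> C}"
    have "subalgebra scale P" unfolding subalgebra_def
    proof (intro conjI ballI allI)
      show "1 \<in> P" unfolding P_def using C_one by (simp add: S_one)
    next
      fix x y assume "x \<in> P" "y \<in> P"
      then have x: "x \<in> C" "S x \<in> C" and y: "y \<in> C" "S y \<in> C" by (auto simp: P_def)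
      show "x + y \<in> P" unfolding P_def using x y C_add(1) by (simp add: S_add)
      show "x * y \<in> P" unfolding P_def using x y C_add(2) by (simp add: S_mult)
    next
      fix k x assume "x \<in> P"
      then have x: "x \<in> C" "S x \<in> C" by (auto simp: P_def)
      show "scale k x \<in> P" unfolding P_def using x C_add(3)[OF x(1) x(1)] C_add(3)[OF x(2) x(2)]
        by (simp add: S_scale)
    qed
    moreover have "G \<subseteq> P"
    proof
      fix g assume "g \<in> G"
      then obtain a b where ab: "a \<in> X" "b \<in> Y" "g = br a b" by (auto simp: G_def br_eq)
      have bl: "bilv scale (\<lambda>u v. ad u (br a (S v)))"
        by (intro bilvI; (rule L lin_ad lin_ad_c lin_br2 | assumption)+)
      have "S (br a b) = D b (\<lambda>u v. ad u (br a (S v)))"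
        unfolding S_br by (rule br_swap)
      also have "\<dots> = tsum (\<lambda>u v. ad u (br a (S v))) (tY b)"
        unfolding D_def using teq_bil[OF vsA _ bl] tY[OF ab(2)] by blast
      also have "\<dots> \<in> C"
      proof (rule tsum_in[OF subC])
        fix u v assume "(u, v) \<in> set (tY b)"
        then have "v \<in> Y" using tY[OF ab(2)] by auto
        then show "ad u (br a (S v)) \<in> C" by (intro normC GC ab(1) SY)
      qed
      finally show "g \<in> P" unfolding P_def using GC[OF ab(1,2)] ab(3) by auto
    qed
    ultimately have "C \<subseteq> P" unfolding C_def by (rule gen_induct)
    then show ?thesis using that by (auto simp: P_def)
  qed

  have DC: "\<exists>t. set t \<subseteq> C \<times> C \<and> teq scale (\<Delta> d) t" if "d \<in> C" for d
  proof -
    define P where "P = {d \<in> C. \<exists>t. set t \<subseteq> C \<times> C \<and> teq scale (\<Delta> d) t}"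
    have "subalgebra scale P" unfolding subalgebra_def
    proof (intro conjI ballI allI)
      show "1 \<in> P" unfolding P_def using C_one one_teq by (intro CollectI conjI exI[of _ "[(1, 1)]"]) auto
    next
      fix x y assume "x \<in> P" "y \<in> P"
      then obtain tx ty where x: "x \<in> C" "set tx \<subseteq> C \<times> C" "teq scale (\<Delta> x) tx"
        and y: "y \<in> C" "set ty \<subseteq> C \<times> C" "teq scale (\<Delta> y) ty" by (auto simp: P_def)
      have "teq scale (\<Delta> (x + y)) (tx @ ty)" unfolding teq_iff
      proof (intro allI impI)
        fix f :: "'a \<Rightarrow> 'a \<Rightarrow> 'k" assume f: "bilv (*) f"
        have "tsum f (\<Delta> (x + y)) = D x f + D y f" using D_linx_add[OF vsK f] by (simp add: D_def)
        also have "\<dots> = tsum f (tx @ ty)"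
          using teq_bil[OF vsK x(3) f] teq_bil[OF vsK y(3) f] by (simp add: D_def)
        finally show "tsum f (\<Delta> (x + y)) = tsum f (tx @ ty)" .
      qed
      then show "x + y \<in> P" unfolding P_def using x y C_add(1) by (auto intro!: exI[of _ "tx @ ty"])
      define txy where "txy = concat (map (\<lambda>(u, v). map (\<lambda>(p, q). (u * p, v * q)) ty) tx)"
      have "teq scale (\<Delta> (x * y)) txy" unfolding teq_iff
      proof (intro allI impI)
        fix f :: "'a \<Rightarrow> 'a \<Rightarrow> 'k" assume f: "bilv (*) f"
        have b1: "bilv (*) (\<lambda>p q. f (u * p) (v * q))" for u v
          by (insert vsK, intro bilvI; (rule L BR[OF f] | assumption)+)
        have b2: "bilv (*) (\<lambda>u v. D y (\<lambda>p q. f (u * p) (v * q)))"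
          by (insert vsK, intro bilvI; (rule L BR[OF f] | assumption)+)
        have "tsum f (\<Delta> (x * y)) = D x (\<lambda>u v. D y (\<lambda>p q. f (u * p) (v * q)))"
          using D_mult[OF vsK f] by (simp add: D_def)
        also have "\<dots> = tsum (\<lambda>u v. D y (\<lambda>p q. f (u * p) (v * q))) tx"
          unfolding D_def[of x] by (rule teq_bil[OF vsK x(3) b2])
        also have "\<dots> = tsum (\<lambda>u v. tsum (\<lambda>p q. f (u * p) (v * q)) ty) tx"
          unfolding D_def using teq_bil[OF vsK y(3) b1] by simp
        also have "\<dots> = tsum f txy" by (simp add: txy_def tsum_concat tsum_map case_prod_beta)
        finally show "tsum f (\<Delta> (x * y)) = tsum f txy" .
      qed
      moreover have "set txy \<subseteq> C \<times> C" using x(2) y(2) C_add(2) by (auto simp: txy_def)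
      ultimately show "x * y \<in> P" unfolding P_def using x y C_add(2) by auto
    next
      fix k x assume "x \<in> P"
      then obtain tx where x: "x \<in> C" "set tx \<subseteq> C \<times> C" "teq scale (\<Delta> x) tx" by (auto simp: P_def)
      define tk where "tk = map (\<lambda>(u, v). (scale k u, v)) tx"
      have "teq scale (\<Delta> (scale k x)) tk" unfolding teq_iff
      proof (intro allI impI)
        fix f :: "'a \<Rightarrow> 'a \<Rightarrow> 'k" assume f: "bilv (*) f"
        have "tsum f (\<Delta> (scale k x)) = k * D x f" using D_linx_scale[OF vsK f] by (simp add: D_def)
        also have "\<dots> = k * tsum f tx" using teq_bil[OF vsK x(3) f] by (simp add: D_def)
        also have "\<dots> = tsum f tk"
          unfolding tk_def tsum_map using f
          by (simp add: tsum_push[of "\<lambda>z. k * z", OF distrib_left] bilv_def linv_def case_prod_beta)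
        finally show "tsum f (\<Delta> (scale k x)) = tsum f tk" .
      qed
      moreover have "set tk \<subseteq> C \<times> C" using x(2) C_add(3) by (auto simp: tk_def)
      ultimately show "scale k x \<in> P" unfolding P_def using x C_add(3)[OF x(1) x(1)] by auto
    qed
    moreover have "G \<subseteq> P"
    proof
      fix g assume "g \<in> G"
      then obtain a b where ab: "a \<in> X" "b \<in> Y" "g = br a b" by (auto simp: G_def br_eq)
      define t where "t = concat (map (\<lambda>(u, v). map (\<lambda>(p, q). (br u p, br v q)) (tY b)) (tX a))"
      have "teq scale (\<Delta> (br a b)) t" unfolding teq_iff
      proof (intro allI impI)
        fix f :: "'a \<Rightarrow> 'a \<Rightarrow> 'k" assume f: "bilv (*) f"
        have b1: "bilv (*) (\<lambda>p q. f (br u p) (br v q))" for u v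
          by (insert vsK, intro bilvI; (rule L BR[OF f] lin_br1 lin_br2 | assumption)+)
        have b2: "bilv (*) (\<lambda>u v. D b (\<lambda>p q. f (br u p) (br v q)))"
          by (insert vsK, intro bilvI; (rule L BR[OF f] lin_br1 lin_br2 | assumption)+)
        have "tsum f (\<Delta> (br a b)) = D a (\<lambda>u v. D b (\<lambda>p q. f (br u p) (br v q)))"
          using D_br[OF vsK f] by (simp add: D_def)
        also have "\<dots> = tsum (\<lambda>u v. D b (\<lambda>p q. f (br u p) (br v q))) (tX a)"
          unfolding D_def[of a] using teq_bil[OF vsK _ b2] tX[OF ab(1)] by blast
        also have "\<dots> = tsum (\<lambda>u v. tsum (\<lambda>p q. f (br u p) (br v q)) (tY b)) (tX a)"
          unfolding D_def using teq_bil[OF vsK conjunct2[OF tY[OF ab(2)]] b1] by simp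
        also have "\<dots> = tsum f t" by (simp add: t_def tsum_concat tsum_map case_prod_beta)
        finally show "tsum f (\<Delta> (br a b)) = tsum f t" .
      qed
      moreover have "set t \<subseteq> C \<times> C" using tX[OF ab(1)] tY[OF ab(2)] GC by (fastforce simp: t_def)
      ultimately show "g \<in> P" unfolding P_def using GC[OF ab(1,2)] ab(3) by auto
    qed
    ultimately have "C \<subseteq> P" unfolding C_def by (rule gen_induct)
    then show ?thesis using that by (auto simp: P_def)
  qed

  have "normal_hopf_subalgebra scale \<Delta> S C"
    unfolding normal_hopf_subalgebra_def hopf_subalgebra_def
    using subC DC SC normC by (auto simp: ad_eq)
  then show ?thesis by (simp add: Ceq)
qed

end

theorem proposition4p2:
  fixes scale :: "'k::field \<Rightarrow> 'a::ring_1 \<Rightarrow> 'a"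
    and \<Delta> :: "'a \<Rightarrow> ('a \<times> 'a) list"
    and \<epsilon> :: "'a \<Rightarrow> 'k"
    and S :: "'a \<Rightarrow> 'a"
    and X Y :: "'a set"
  assumes "hopf_algebra scale \<Delta> \<epsilon> S"
    and "cocommutative scale \<Delta>"
    and "normal_hopf_subalgebra scale \<Delta> S X"
    and "normal_hopf_subalgebra scale \<Delta> S Y"
  shows "normal_hopf_subalgebra scale \<Delta> S (hopf_commutator scale \<Delta> S X Y)"
proof -
  interpret hopf scale \<Delta> \<epsilon> S using assms(1,2) by (rule hopf.intro)
  show ?thesis by (rule main[OF assms(3,4)])
qed

end
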